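(* Let $(V_0,\dots,V_d)$ be a partition of $V$, $\mathbf x\in\mathbb R^V$, and $\Delta=(\Delta(0),\dots,\Delta(d))\in\mathbb R^{d+1}$. Let $\tilde{\mathbf x}$ be obtained from $\mathbf x$ by adding $\Delta(i)$ to the potential of every vertex in $V_i$. Then $$\mathcal B(\tilde{\mathbf x})-\mathcal B(\mathbf x)=\mathbf b_H^\top\Delta-\tfrac12\Delta^\top\mathbf L_H\Delta,$$ where $H$ is the contracted graph with vertices $V_0,\dots,V_d$ and resistances $r(V_k,V_l)=\big(\sum_{ij\in\delta(V_k,V_l)}\frac1{r(i,j)}\big)^{-1}$, $\mathbf L_H$ is the Laplacian of $H$, and $b_H(k)=b(V_k)-f(V_k)$ for $k=0,\dots,d$. In particular, the $\Delta$ maximizing $\mathcal B(\tilde{\mathbf x})-\mathcal B(\mathbf x)$ is given by a solution of $\mathbf L_H\Delta=\mathbf b_H$.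
   Context: $G=(V,E)$ is an undirected graph with resistances $r(e)>0$ and a fixed orientation $\vec E$; $\mathbf b\in\mathbb R^V$ with $\sum_ib(i)=0$. $\mathbf L=\sum_{ij\in E}\frac1{r(i,j)}(\mathbf e_i-\mathbf e_j)(\mathbf e_i-\mathbf e_j)^\top$ and $\mathcal B(\mathbf x)=\mathbf b^\top\mathbf x-\frac12\mathbf x^\top\mathbf L\mathbf x$. For $U\subset V$, $b(U)=\sum_{v\in U}b(v)$ and $f(U)=\sum_{ij\in E,\,i\in U,\,j\notin U}\frac{x(i)-x(j)}{r(i,j)}$ is the flow leaving $U$ in the potential-induced flow of $\mathbf x$; $\delta(V_k,V_l)$ is the set of edges with one endpoint in $V_k$ and the other in $V_l$. The Laplacian of a graph with resistances $r_H$ is $\sum_{kl}\frac1{r_H(k,l)}(\mathbf e_k-\mathbf e_l)(\mathbf e_k-\mathbf e_l)^\top$. *)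

theory Defs
  imports Complex_Main
begin

definition lap :: "('v \<times> 'v) set \<Rightarrow> ('v \<times> 'v \<Rightarrow> real) \<Rightarrow> 'v \<Rightarrow> 'v \<Rightarrow> real" where
  "lap E r u w = (\<Sum>(i,j)\<in>E. (1 / r (i,j)) *
      ((if u = i then 1 else 0) - (if u = j then 1 else 0)) *
      ((if w = i then 1 else 0) - (if w = j then 1 else 0)))"

definition energyB :: "'v set \<Rightarrow> ('v \<times> 'v) set \<Rightarrow> ('v \<times> 'v \<Rightarrow> real) \<Rightarrow> ('v \<Rightarrow> real)
    \<Rightarrow> ('v \<Rightarrow> real) \<Rightarrow> real" where
  "energyB V E r b x = (\<Sum>v\<in>V. b v * x v)
      - 1/2 * (\<Sum>u\<in>V. \<Sum>w\<in>V. x u * lap E r u w * x w)"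

text \<open>Flow leaving U in the potential-induced flow of x (each undirected edge with exactly one
  endpoint in U counted once, oriented away from U).\<close>
definition flow_out :: "('v \<times> 'v) set \<Rightarrow> ('v \<times> 'v \<Rightarrow> real) \<Rightarrow> ('v \<Rightarrow> real) \<Rightarrow> 'v set \<Rightarrow> real" where
  "flow_out E r x U = (\<Sum>(i,j)\<in>E.
      (if i \<in> U \<and> j \<notin> U then (x i - x j) / r (i,j)
       else if j \<in> U \<and> i \<notin> U then (x j - x i) / r (i,j) else 0))"

definition cut_edges :: "('v \<times> 'v) set \<Rightarrow> 'v set \<Rightarrow> 'v set \<Rightarrow> ('v \<times> 'v) set" where
  "cut_edges E A B = {(i,j)\<in>E. (i \<in> A \<and> j \<in> B) \<or> (i \<in> B \<and> j \<in> A)}"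

definition resH :: "('v \<times> 'v) set \<Rightarrow> ('v \<times> 'v \<Rightarrow> real) \<Rightarrow> (nat \<Rightarrow> 'v set) \<Rightarrow> nat \<Rightarrow> nat \<Rightarrow> real" where
  "resH E r P k l = inverse (\<Sum>e\<in>cut_edges E (P k) (P l). 1 / r e)"

text \<open>Laplacian of H: sum over unordered pairs k<l of vertices of H. Pairs with no connecting
  edge have resH = inverse 0 = 0, hence contribute 0 (they are not edges of H).\<close>
definition lapH :: "('v \<times> 'v) set \<Rightarrow> ('v \<times> 'v \<Rightarrow> real) \<Rightarrow> (nat \<Rightarrow> 'v set) \<Rightarrow> nat \<Rightarrow> nat \<Rightarrow> nat \<Rightarrow> real" where
  "lapH E r P d a c = (\<Sum>(k,l)\<in>{(k,l). k < l \<and> l \<le> d}. (1 / resH E r P k l) *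
      ((if a = k then 1 else 0) - (if a = l then 1 else 0)) *
      ((if c = k then 1 else 0) - (if c = l then 1 else 0)))"

definition bH :: "('v \<times> 'v) set \<Rightarrow> ('v \<times> 'v \<Rightarrow> real) \<Rightarrow> ('v \<Rightarrow> real) \<Rightarrow> ('v \<Rightarrow> real)
    \<Rightarrow> (nat \<Rightarrow> 'v set) \<Rightarrow> nat \<Rightarrow> real" where
  "bH E r b x P k = (\<Sum>v\<in>P k. b v) - flow_out E r x (P k)"

definition shift :: "(nat \<Rightarrow> 'v set) \<Rightarrow> nat \<Rightarrow> ('v \<Rightarrow> real) \<Rightarrow> (nat \<Rightarrow> real) \<Rightarrow> 'v \<Rightarrow> real" where
  "shift P d x \<Delta> v = x v + (\<Sum>k\<le>d. if v \<in> P k then \<Delta> k else 0)"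

end

theory Submission
  imports Defs
begin

lemma sum_ind:
  fixes y :: "'a \<Rightarrow> real"
  assumes "finite I" "i \<in> I" "j \<in> I"
  shows "(\<Sum>u\<in>I. y u * ((if u = i then 1 else 0) - (if u = j then 1 else 0))) = y i - y j"
proof -
  have "(\<Sum>u\<in>I. y u * ((if u = i then 1 else 0) - (if u = j then 1 else 0)))
     = (\<Sum>u\<in>I. (if u = i then y u else 0)) - (\<Sum>u\<in>I. (if u = j then y u else 0))"
    by (simp only: sum_subtractf[symmetric]) (intro sum.cong refl, auto)
  then show ?thesis using assms by (simp add: sum.delta)
qed

lemma lap_quad:
  fixes y z :: "'a \<Rightarrow> real"
  assumes fin: "finite I" and sub: "S \<subseteq> I \<times> I"
  shows "(\<Sum>u\<in>I. \<Sum>w\<in>I. y u * lap S r u w * z w)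
       = (\<Sum>(i,j)\<in>S. (y i - y j) * (z i - z j) / r (i,j))"
proof -
  have finS: "finite S" using sub fin by (meson finite_SigmaI finite_subset)
  define A where "A u p = ((if u = fst p then 1 else 0) - (if u = snd p then 1 else 0) :: real)" for u :: 'a and p :: "'a \<times> 'a"
  have lapA: "lap S r u w = (\<Sum>p\<in>S. (1 / r p) * A u p * A w p)" for u w
    unfolding lap_def A_def by (simp add: case_prod_beta)
  have "(\<Sum>u\<in>I. \<Sum>w\<in>I. y u * lap S r u w * z w)
      = (\<Sum>u\<in>I. \<Sum>w\<in>I. \<Sum>p\<in>S. (1 / r p) * (y u * A u p) * (z w * A w p))"
  proof (intro sum.cong refl)
    fix u w
    have "y u * lap S r u w * z w = (\<Sum>p\<in>S. y u * ((1 / r p) * A u p * A w p) * z w)"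
      unfolding lapA by (simp only: sum_distrib_left sum_distrib_right)
    also have "\<dots> = (\<Sum>p\<in>S. (1 / r p) * (y u * A u p) * (z w * A w p))"
      by (intro sum.cong refl) (simp only: mult_ac)
    finally show "y u * lap S r u w * z w = (\<Sum>p\<in>S. (1 / r p) * (y u * A u p) * (z w * A w p))" .
  qed
  also have "\<dots> = (\<Sum>p\<in>S. \<Sum>u\<in>I. \<Sum>w\<in>I. (1 / r p) * (y u * A u p) * (z w * A w p))"
    by (simp only: sum.swap[of _ _ S])
  also have "\<dots> = (\<Sum>p\<in>S. (1 / r p) * (\<Sum>u\<in>I. y u * A u p) * (\<Sum>w\<in>I. z w * A w p))"
  proof (intro sum.cong refl)
    fix p
    have "(1 / r p) * (\<Sum>u\<in>I. y u * A u p) * (\<Sum>w\<in>I. z w * A w p)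
        = (1 / r p) * (\<Sum>u\<in>I. \<Sum>w\<in>I. (y u * A u p) * (z w * A w p))"
      by (simp only: mult.assoc sum_product)
    also have "\<dots> = (\<Sum>u\<in>I. \<Sum>w\<in>I. (1 / r p) * ((y u * A u p) * (z w * A w p)))"
      by (simp only: sum_distrib_left)
    finally show "(\<Sum>u\<in>I. \<Sum>w\<in>I. (1 / r p) * (y u * A u p) * (z w * A w p))
       = (1 / r p) * (\<Sum>u\<in>I. y u * A u p) * (\<Sum>w\<in>I. z w * A w p)"
      by (simp only: mult.assoc)
  qed
  also have "\<dots> = (\<Sum>p\<in>S. (1 / r p) * (y (fst p) - y (snd p)) * (z (fst p) - z (snd p)))"
  proof (rule sum.cong)
    fix p assume "p \<in> S"
    then have "fst p \<in> I" "snd p \<in> I" using sub by auto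
    then show "(1 / r p) * (\<Sum>u\<in>I. y u * A u p) * (\<Sum>w\<in>I. z w * A w p)
        = (1 / r p) * (y (fst p) - y (snd p)) * (z (fst p) - z (snd p))"
      unfolding A_def using sum_ind[OF fin] by simp
  qed simp
  finally show ?thesis by (simp add: case_prod_beta)
qed

theorem mainTheorem8:
  fixes V :: "'v set" and E :: "('v \<times> 'v) set" and r :: "'v \<times> 'v \<Rightarrow> real"
    and b x :: "'v \<Rightarrow> real" and P :: "nat \<Rightarrow> 'v set" and d :: nat and \<Delta> :: "nat \<Rightarrow> real"
  assumes finV: "finite V"
    and E_sub: "E \<subseteq> V \<times> V"
    and noloop: "\<And>i j. (i,j) \<in> E \<Longrightarrow> i \<noteq> j"
    and orient: "\<And>i j. (i,j) \<in> E \<Longrightarrow> (j,i) \<notin> E"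
    and rpos: "\<And>e. e \<in> E \<Longrightarrow> r e > 0"
    and bsum: "(\<Sum>v\<in>V. b v) = 0"
    and part_ne: "\<And>k. k \<le> d \<Longrightarrow> P k \<noteq> {}"
    and part_disj: "\<And>k l. k \<le> d \<Longrightarrow> l \<le> d \<Longrightarrow> k \<noteq> l \<Longrightarrow> P k \<inter> P l = {}"
    and part_cover: "(\<Union>k\<le>d. P k) = V"
  shows "energyB V E r b (shift P d x \<Delta>) - energyB V E r b x =
           (\<Sum>k\<le>d. bH E r b x P k * \<Delta> k)
           - 1/2 * (\<Sum>k\<le>d. \<Sum>l\<le>d. \<Delta> k * lapH E r P d k l * \<Delta> l)
    \<and> ((\<forall>\<Delta>'. energyB V E r b (shift P d x \<Delta>') - energyB V E r b x
              \<le> energyB V E r b (shift P d x \<Delta>) - energyB V E r b x)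
       \<longleftrightarrow> (\<forall>k\<le>d. (\<Sum>l\<le>d. lapH E r P d k l * \<Delta> l) = bH E r b x P k))"
proof -
  define S where "S = {(k,l). k < l \<and> l \<le> (d::nat)}"
  have SI: "S \<subseteq> {..d} \<times> {..d}" unfolding S_def by auto
  have finS: "finite S" using SI by (meson finite_SigmaI finite_atMost finite_subset)
  define rH where "rH = (\<lambda>(k,l). resH E r P k l)"
  have lapH_eq: "lapH E r P d = lap S rH"
    unfolding lapH_def lap_def S_def rH_def by (intro ext) (simp add: case_prod_beta)
  define FH where "FH y z = (\<Sum>(k,l)\<in>S. (y k - y l) * (z k - z l) / resH E r P k l)" for y z :: "nat \<Rightarrow> real"
  have QH: "(\<Sum>k\<le>d. \<Sum>l\<le>d. y k * lapH E r P d k l * z l) = FH y z" for y z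
    unfolding lapH_eq FH_def using lap_quad[OF finite_atMost SI, of y rH z]
    by (simp add: rH_def case_prod_beta)
  have finE: "finite E" using E_sub finV by (meson finite_SigmaI finite_subset)
  define FE where "FE y z = (\<Sum>(i,j)\<in>E. (y i - y j) * (z i - z j) / r (i,j))" for y z :: "'v \<Rightarrow> real"
  have QE: "(\<Sum>u\<in>V. \<Sum>w\<in>V. y u * lap E r u w * z w) = FE y z" for y z
    unfolding FE_def using lap_quad[OF finV E_sub] by simp
  have enE: "energyB V E r b y = (\<Sum>v\<in>V. b v * y v) - 1/2 * FE y y" for y
    unfolding energyB_def QE ..
  define \<delta> where "\<delta> D v = (\<Sum>k\<le>d. if v \<in> P k then D k else 0)" for D :: "nat \<Rightarrow> real" and v
  have shift_eq: "shift P d x D = (\<lambda>v. x v + \<delta> D v)" for D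
    unfolding shift_def \<delta>_def by (rule ext) simp
  have FE_exp: "FE (\<lambda>v. y v + z v) (\<lambda>v. y v + z v) = FE y y + 2 * FE y z + FE z z" for y z
    unfolding FE_def by (simp add: sum.distrib[symmetric] sum_distrib_left case_prod_beta
       add_divide_distrib[symmetric]) (intro sum.cong refl, simp add: algebra_simps add_divide_distrib[symmetric])
  have PV: "k \<le> d \<Longrightarrow> P k \<subseteq> V" for k unfolding part_cover[symmetric] by blast
  have bsum_eq: "(\<Sum>v\<in>V. b v * \<delta> D v) = (\<Sum>k\<le>d. (\<Sum>v\<in>P k. b v) * D k)" for D
  proof -
    have "(\<Sum>v\<in>V. b v * \<delta> D v) = (\<Sum>k\<le>d. \<Sum>v\<in>V. (if v \<in> P k then b v * D k else 0))"
      unfolding \<delta>_def sum_distrib_left by (rule sum.swap[THEN trans]) (intro sum.cong refl, simp)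
    also have "\<dots> = (\<Sum>k\<le>d. (\<Sum>v\<in>P k. b v) * D k)"
    proof (intro sum.cong refl)
      fix k assume "k \<in> {..d}"
      then have "V \<inter> P k = P k" using PV by auto
      then show "(\<Sum>v\<in>V. (if v \<in> P k then b v * D k else 0)) = (\<Sum>v\<in>P k. b v) * D k"
        using sum.inter_restrict[OF finV, of "\<lambda>v. b v * D k" "P k"] by (simp add: sum_distrib_right)
    qed
    finally show ?thesis .
  qed
  have flow_eq: "FE x (\<delta> D) = (\<Sum>k\<le>d. flow_out E r x (P k) * D k)" for D
  proof -
    define h where "h p k = (if fst p \<in> P k \<and> snd p \<notin> P k then (x (fst p) - x (snd p)) / r p
       else if snd p \<in> P k \<and> fst p \<notin> P k then (x (snd p) - x (fst p)) / r p else 0) * D k" for p k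
    have e: "(x (fst p) - x (snd p)) * (\<delta> D (fst p) - \<delta> D (snd p)) / r p = (\<Sum>k\<le>d. h p k)" for p
    proof -
      have "\<delta> D (fst p) - \<delta> D (snd p) = (\<Sum>k\<le>d. (if fst p \<in> P k then D k else 0) - (if snd p \<in> P k then D k else 0))"
        unfolding \<delta>_def by (simp add: sum_subtractf)
      then show ?thesis unfolding h_def
        by (simp add: sum_distrib_left sum_divide_distrib) (intro sum.cong refl, auto simp: field_simps)
    qed
    have "FE x (\<delta> D) = (\<Sum>p\<in>E. \<Sum>k\<le>d. h p k)"
      unfolding FE_def using e by (simp add: case_prod_beta)
    also have "\<dots> = (\<Sum>k\<le>d. \<Sum>p\<in>E. h p k)" by (rule sum.swap)
    also have "\<dots> = (\<Sum>k\<le>d. flow_out E r x (P k) * D k)"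
      unfolding flow_out_def sum_distrib_right
    proof (intro sum.cong refl)
      fix k p assume "p \<in> E"
      obtain i j where "p = (i,j)" by fastforce
      then show "h p k = (case p of (i, j) \<Rightarrow> if i \<in> P k \<and> j \<notin> P k then (x i - x j) / r (i, j)
            else if j \<in> P k \<and> i \<notin> P k then (x j - x i) / r (i, j) else 0) * D k"
        unfolding h_def by simp
    qed
    finally show ?thesis .
  qed
  have cex: "\<exists>!k. k \<le> d \<and> v \<in> P k" if "v \<in> V" for v
  proof -
    have "v \<in> (\<Union>k\<le>d. P k)" using that part_cover by simp
    then obtain k where "k \<le> d" "v \<in> P k" by blast
    then show ?thesis
    proof (intro ex1I[of _ k])
      fix k' assume "k' \<le> d \<and> v \<in> P k'"
      then show "k' = k" using part_disj[of k' k] \<open>k \<le> d\<close> \<open>v \<in> P k\<close> by auto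
    qed simp
  qed
  define c where "c v = (THE k. k \<le> d \<and> v \<in> P k)" for v
  have c: "c v \<le> d \<and> v \<in> P (c v)" if "v \<in> V" for v
    unfolding c_def using theI'[OF cex[OF that]] .
  have cu: "k = c v" if "v \<in> V" "k \<le> d" "v \<in> P k" for v k
  proof (rule ccontr)
    assume "k \<noteq> c v"
    then have "P k \<inter> P (c v) = {}" using part_disj c[OF that(1)] that(2) by simp
    then show False using c[OF that(1)] that(3) by auto
  qed
  have memc: "(v \<in> P k) = (k = c v)" if "v \<in> V" "k \<le> d" for v k
    using c[OF that(1)] cu[OF that(1) that(2)] by auto
  have \<delta>c: "\<delta> D v = D (c v)" if "v \<in> V" for v D
  proof -
    have "\<delta> D v = (\<Sum>k\<le>d. if k = c v then D k else 0)"
      unfolding \<delta>_def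
    proof (intro sum.cong refl)
      fix k assume k: "k \<in> {..d}"
      show "(if v \<in> P k then D k else 0) = (if k = c v then D k else 0)"
      proof (cases "k = c v")
        case True then show ?thesis using c[OF that] by simp
      next
        case False then have "v \<notin> P k" using cu[OF that, of k] k by auto
        then show ?thesis using False by simp
      qed
    qed
    then show ?thesis using c[OF that] by simp
  qed
  define sH where "sH p = (\<Sum>e\<in>cut_edges E (P (fst p)) (P (snd p)). 1 / r e)" for p
  have cutE: "cut_edges E A B \<subseteq> E" for A B unfolding cut_edges_def by auto
  have quadH: "FE (\<delta> D) (\<delta> D) = FH D D" for D
  proof -
    define g where "g e p = (if e \<in> cut_edges E (P (fst p)) (P (snd p))
         then (D (fst p) - D (snd p)) * (D (fst p) - D (snd p)) / r e else 0)" for e p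
    have edge: "(\<delta> D (fst e) - \<delta> D (snd e)) * (\<delta> D (fst e) - \<delta> D (snd e)) / r e = (\<Sum>p\<in>S. g e p)"
      if eE: "e \<in> E" for e
    proof -
      obtain i j where ij: "e = (i,j)" by fastforce
      have iV: "i \<in> V" and jV: "j \<in> V" using eE ij E_sub by auto
      have set_eq: "{p\<in>S. e \<in> cut_edges E (P (fst p)) (P (snd p))}
          = (if c i = c j then {} else {(min (c i) (c j), max (c i) (c j))})"
      proof -
        have mem: "((k,l) \<in> S \<and> (i,j) \<in> cut_edges E (P k) (P l)) \<longleftrightarrow>
              (k < l \<and> l \<le> d \<and> ((k = c i \<and> l = c j) \<or> (k = c j \<and> l = c i)))" for k l
        proof (cases "k < l \<and> l \<le> d")
          case True then have "k \<le> d" by simp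
          have "(i,j) \<in> E" using eE ij by simp
          then show ?thesis unfolding S_def cut_edges_def
            using True memc[OF iV \<open>k \<le> d\<close>] memc[OF iV, of l] memc[OF jV \<open>k \<le> d\<close>]
                memc[OF jV, of l] by auto
        next
          case False then show ?thesis unfolding S_def by auto
        qed
        show ?thesis
        proof (rule set_eqI)
          fix p :: "nat \<times> nat"
          obtain k l where p: "p = (k,l)" by fastforce
          show "p \<in> {p\<in>S. e \<in> cut_edges E (P (fst p)) (P (snd p))}
              \<longleftrightarrow> p \<in> (if c i = c j then {} else {(min (c i) (c j), max (c i) (c j))})"
            unfolding p ij using mem[of k l] c[OF iV] c[OF jV] by (auto simp: min_def max_def)
        qed
      qed
      have "(\<Sum>p\<in>S. g e p) = (\<Sum>p\<in>{p\<in>S. e \<in> cut_edges E (P (fst p)) (P (snd p))}.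
           (D (fst p) - D (snd p)) * (D (fst p) - D (snd p)) / r e)"
        unfolding g_def by (simp add: sum.inter_filter[OF finS])
      also have "\<dots> = (\<delta> D (fst e) - \<delta> D (snd e)) * (\<delta> D (fst e) - \<delta> D (snd e)) / r e"
        unfolding set_eq using \<delta>c[OF iV] \<delta>c[OF jV] ij
        by (cases "c i \<le> c j") (auto simp: min_def max_def algebra_simps)
      finally show ?thesis by simp
    qed
    have "FE (\<delta> D) (\<delta> D) = (\<Sum>e\<in>E. \<Sum>p\<in>S. g e p)"
      unfolding FE_def using edge by (simp add: case_prod_beta)
    also have "\<dots> = (\<Sum>p\<in>S. \<Sum>e\<in>E. g e p)" by (rule sum.swap)
    also have "\<dots> = (\<Sum>p\<in>S. (D (fst p) - D (snd p)) * (D (fst p) - D (snd p)) * sH p)"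
    proof (intro sum.cong refl)
      fix p
      have "E \<inter> cut_edges E (P (fst p)) (P (snd p)) = cut_edges E (P (fst p)) (P (snd p))"
        using cutE by blast
      then show "(\<Sum>e\<in>E. g e p) = (D (fst p) - D (snd p)) * (D (fst p) - D (snd p)) * sH p"
        unfolding g_def sH_def
        using sum.inter_restrict[OF finE, of "\<lambda>e. (D (fst p) - D (snd p)) * (D (fst p) - D (snd p)) / r e"
            "cut_edges E (P (fst p)) (P (snd p))"]
        by (simp add: sum_distrib_left)
    qed
    also have "\<dots> = FH D D"
      unfolding FH_def sH_def resH_def by (simp add: case_prod_beta divide_inverse)
    finally show ?thesis .
  qed
  define G where "G D = (\<Sum>k\<le>d. bH E r b x P k * D k) - 1/2 * FH D D" for D
  have diff: "energyB V E r b (shift P d x D) - energyB V E r b x = G D" for D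
  proof -
    have "energyB V E r b (shift P d x D) - energyB V E r b x
      = (\<Sum>v\<in>V. b v * \<delta> D v) - FE x (\<delta> D) - 1/2 * FE (\<delta> D) (\<delta> D)"
      unfolding shift_eq enE FE_exp by (simp add: algebra_simps sum.distrib)
    also have "\<dots> = G D"
      unfolding bsum_eq flow_eq quadH G_def bH_def
      by (simp add: algebra_simps sum_subtractf)
    finally show ?thesis .
  qed
  have resH_nn: "resH E r P k l \<ge> 0" for k l
    unfolding resH_def
  proof (intro inverse_nonnegative_iff_nonnegative[THEN iffD2] sum_nonneg)
    fix e assume "e \<in> cut_edges E (P k) (P l)"
    then have "e \<in> E" using cutE by blast
    then show "0 \<le> 1 / r e" using rpos[of e] by simp
  qed
  have FH_nn: "FH y y \<ge> 0" for y
    unfolding FH_def by (intro sum_nonneg) (auto intro!: divide_nonneg_nonneg resH_nn)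
  have FH_exp: "FH (\<lambda>v. y v + z v) (\<lambda>v. y v + z v) = FH y y + 2 * FH z y + FH z z" for y z
    unfolding FH_def by (simp add: sum.distrib[symmetric] sum_distrib_left case_prod_beta
       add_divide_distrib[symmetric]) (intro sum.cong refl, simp add: algebra_simps add_divide_distrib[symmetric])
  have FH_scale: "FH (\<lambda>v. t * y v) (\<lambda>v. t * y v) = t * t * FH y y" for t y
    unfolding FH_def by (simp add: sum_distrib_left case_prod_beta) (intro sum.cong refl, simp add: algebra_simps)
  define LD where "LD k = (\<Sum>l\<le>d. lapH E r P d k l * \<Delta> l)" for k
  have FHL: "FH z \<Delta> = (\<Sum>k\<le>d. z k * LD k)" for z
    unfolding QH[symmetric] LD_def by (simp add: sum_distrib_left mult.assoc)
  have Gdiff: "G (\<lambda>l. \<Delta> l + z l) - G \<Delta> = (\<Sum>k\<le>d. z k * (bH E r b x P k - LD k)) - 1/2 * FH z z" for z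
    unfolding G_def FH_exp[of \<Delta> z] FHL
    by (simp add: algebra_simps sum.distrib sum_subtractf)
  have part1: "energyB V E r b (shift P d x \<Delta>) - energyB V E r b x =
           (\<Sum>k\<le>d. bH E r b x P k * \<Delta> k)
           - 1/2 * (\<Sum>k\<le>d. \<Sum>l\<le>d. \<Delta> k * lapH E r P d k l * \<Delta> l)"
    unfolding diff QH G_def ..
  have part2: "(\<forall>\<Delta>'. G \<Delta>' \<le> G \<Delta>) \<longleftrightarrow> (\<forall>k\<le>d. LD k = bH E r b x P k)"
  proof
    assume H: "\<forall>\<Delta>'. G \<Delta>' \<le> G \<Delta>"
    show "\<forall>k\<le>d. LD k = bH E r b x P k"
    proof (rule ccontr)
      assume "\<not> (\<forall>k\<le>d. LD k = bH E r b x P k)"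
      then obtain k where k: "k \<le> d" "LD k \<noteq> bH E r b x P k" by blast
      define g where "g = bH E r b x P k - LD k"
      have g0: "g \<noteq> 0" using k unfolding g_def by simp
      define e where "e l = (if l = k then 1 else 0 :: real)" for l
      define m where "m = FH e e"
      have m0: "m \<ge> 0" unfolding m_def by (rule FH_nn)
      define t where "t = g / (m + 1)"
      have s1: "(\<Sum>l\<le>d. t * e l * (bH E r b x P l - LD l)) = t * g"
      proof -
        have "(\<Sum>l\<le>d. t * e l * (bH E r b x P l - LD l))
            = (\<Sum>l\<le>d. if l = k then t * (bH E r b x P l - LD l) else 0)"
          by (intro sum.cong refl) (simp add: e_def)
        then show ?thesis using k unfolding g_def by simp
      qed
      have "G (\<lambda>l. \<Delta> l + t * e l) - G \<Delta> = t * g - 1/2 * (t * t * m)"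
        using Gdiff[of "\<lambda>l. t * e l"] unfolding s1 FH_scale m_def by simp
      moreover have "t * g > 0" unfolding t_def using g0 m0
        by (simp add: field_simps) (metis not_real_square_gt_zero)
      moreover have "t * t * m \<le> t * g"
      proof -
        have "t * t * m = (t * g) * (m / (m + 1))" unfolding t_def using m0 by (simp add: field_simps)
        also have "\<dots> \<le> (t * g) * 1"
          using \<open>t * g > 0\<close> m0 by (intro mult_left_mono) auto
        finally show ?thesis by simp
      qed
      ultimately have "G (\<lambda>l. \<Delta> l + t * e l) > G \<Delta>" by linarith
      then show False using H by (meson not_le)
    qed
  next
    assume H: "\<forall>k\<le>d. LD k = bH E r b x P k"
    show "\<forall>\<Delta>'. G \<Delta>' \<le> G \<Delta>"
    proof
      fix \<Delta>' :: "nat \<Rightarrow> real"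
      define z where "z l = \<Delta>' l - \<Delta> l" for l
      have eq: "\<Delta>' = (\<lambda>l. \<Delta> l + z l)" unfolding z_def by auto
      have "(\<Sum>k\<le>d. z k * (bH E r b x P k - LD k)) = 0" using H by simp
      then have "G \<Delta>' - G \<Delta> = - 1/2 * FH z z" unfolding eq Gdiff by simp
      then show "G \<Delta>' \<le> G \<Delta>" using FH_nn[of z] by simp
    qed
  qed
  show ?thesis using part1 part2 unfolding diff LD_def by simp
qed

end
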